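(* Let $N=\{1,\dots,n\}$, let $U$ be a finite set, $S_1,\dots,S_n\subseteq U$, $w:U\to\mathbb{R}$, $c\in\mathbb{R}$, and let $s:2^N\to\mathbb{R}$ be defined by $s_A=c+\mathbf{w}(\bigcup_{i\in A}S_i)$, where $\mathbf{w}(S)=\sum_{u\in S}w(u)$. Define the type-3 discrete set Fourier transform of $s$ by $\widehat{s}^{(3)}_B=\sum_{A\subseteq B}(-1)^{|A|}s_A$ for $B\subseteq N$. Then $$\widehat{s}^{(3)}_B=\begin{cases}-\mathbf{w}\big(\bigcap_{i\in B}S_i\big), & B\neq\emptyset,\\ s_\emptyset, & B=\emptyset.\end{cases}$$ *)

theory Defs
  imports Complex_Main
begin

definition wt :: "('u \<Rightarrow> real) \<Rightarrow> 'u set \<Rightarrow> real" where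
  "wt w S = (\<Sum>u\<in>S. w u)"

definition cover_fun :: "real \<Rightarrow> ('u \<Rightarrow> real) \<Rightarrow> (nat \<Rightarrow> 'u set) \<Rightarrow> nat set \<Rightarrow> real" where
  "cover_fun c w S A = c + wt w (\<Union>i\<in>A. S i)"

definition fourier3 :: "(nat set \<Rightarrow> real) \<Rightarrow> nat set \<Rightarrow> real" where
  "fourier3 s B = (\<Sum>A\<in>Pow B. (-1) ^ card A * s A)"

end

theory Submission
  imports Defs
begin

lemma alt_sum:
  assumes "finite T"
  shows "(\<Sum>A\<in>Pow T. (-1::real) ^ card A) = (if T = {} then 1 else 0)"
proof -
  have "(\<Prod>x\<in>T. (1::real) - 1) = (\<Sum>X\<in>Pow T. (-1) ^ card X * (\<Prod>x\<in>X. 1) * (\<Prod>x\<in>T-X. 1))"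
    by (rule prod_diff_conv_sum[OF assms])
  then show ?thesis using assms by (auto simp: power_0_left card_eq_0_iff)
qed

lemma inner_sum:
  assumes "finite B"
  shows "(\<Sum>A\<in>Pow B. (-1::real) ^ card A * (if u \<in> (\<Union>i\<in>A. S i) then 1 else 0))
     = (if B = {} then 1 else 0) - (if {i\<in>B. u \<notin> S i} = {} then 1 else 0)"
proof -
  let ?T = "{i\<in>B. u \<notin> S i}"
  have fT: "finite ?T" using assms by simp
  have "(\<Sum>A\<in>Pow B. (-1::real) ^ card A * (if u \<in> (\<Union>i\<in>A. S i) then 1 else 0))
     = (\<Sum>A\<in>Pow B. (-1::real) ^ card A - (if A \<subseteq> ?T then (-1) ^ card A else 0))"
    by (rule sum.cong) auto
  also have "\<dots> = (\<Sum>A\<in>Pow B. (-1::real) ^ card A) - (\<Sum>A\<in>Pow B. (if A \<subseteq> ?T then (-1) ^ card A else 0))"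
    by (simp add: sum_subtractf)
  also have "(\<Sum>A\<in>Pow B. (if A \<subseteq> ?T then (-1::real) ^ card A else 0)) = (\<Sum>A\<in>Pow ?T. (-1::real) ^ card A)"
  proof -
    have "(\<Sum>A\<in>Pow B. (if A \<subseteq> ?T then (-1::real) ^ card A else 0)) = (\<Sum>A\<in>{A\<in>Pow B. A \<subseteq> ?T}. (-1::real) ^ card A)"
      using sum.inter_filter[of "Pow B" "\<lambda>A. (-1::real)^card A" "\<lambda>A. A \<subseteq> ?T"] assms by simp
    also have "{A\<in>Pow B. A \<subseteq> ?T} = Pow ?T" by auto
    finally show ?thesis .
  qed
  finally show ?thesis using alt_sum[OF assms] alt_sum[OF fT] by simp
qed

lemma wtU_lemma: "X \<subseteq> U \<Longrightarrow> finite U \<Longrightarrow> wt w X = (\<Sum>u\<in>U. w u * (if u \<in> X then 1 else 0))"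
  unfolding wt_def
  using sum.inter_filter[of U w "\<lambda>u. u \<in> X"] by (simp add: if_distrib Int_absorb1 Collect_mem_eq cong: if_cong) (metis (mono_tags) Int_def inf.absorb_iff2 inf_commute)

theorem theorem2:
  fixes n :: nat and U :: "'u set" and S :: "nat \<Rightarrow> 'u set"
    and w :: "'u \<Rightarrow> real" and c :: real and B :: "nat set"
  assumes "finite U"
    and "\<And>i. i \<in> {1..n} \<Longrightarrow> S i \<subseteq> U"
    and "B \<subseteq> {1..n}"
  shows "fourier3 (cover_fun c w S) B =
           (if B \<noteq> {} then - wt w (\<Inter>i\<in>B. S i) else cover_fun c w S {})"
proof (cases "B = {}")
  case True
  then show ?thesis by (simp add: fourier3_def)
next
  case False
  have fB: "finite B" using assms(3) finite_subset by blast
  have wtU: "wt w X = (\<Sum>u\<in>U. w u * (if u \<in> X then 1 else 0))" if "X \<subseteq> U" for X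
    using wtU_lemma[OF that assms(1)] .
  have "fourier3 (cover_fun c w S) B
      = (\<Sum>A\<in>Pow B. (-1) ^ card A * c + (\<Sum>u\<in>U. w u * ((-1) ^ card A * (if u \<in> (\<Union>i\<in>A. S i) then 1 else 0))))"
  proof -
    { fix A assume "A \<in> Pow B"
      then have "(\<Union>i\<in>A. S i) \<subseteq> U" using assms(2,3) by blast
      then have "(-1) ^ card A * cover_fun c w S A = (-1) ^ card A * c + (\<Sum>u\<in>U. w u * ((-1) ^ card A * (if u \<in> (\<Union>i\<in>A. S i) then 1 else 0)))"
        unfolding cover_fun_def by (simp add: wtU distrib_left sum_distrib_left mult.left_commute) }
    then show ?thesis unfolding fourier3_def by (rule sum.cong[OF refl])
  qed
  also have "\<dots> = c * (\<Sum>A\<in>Pow B. (-1) ^ card A) + (\<Sum>u\<in>U. w u * (\<Sum>A\<in>Pow B. (-1) ^ card A * (if u \<in> (\<Union>i\<in>A. S i) then 1 else 0)))"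
    by (simp add: sum.distrib sum_distrib_left sum_distrib_right mult.commute sum.swap[of _ U])
  also have "\<dots> = (\<Sum>u\<in>U. w u * (- (if {i\<in>B. u \<notin> S i} = {} then 1 else 0)))"
  proof -
    have inner: "(\<Sum>A\<in>Pow B. (-1) ^ card A * (if u \<in> (\<Union>i\<in>A. S i) then 1 else 0)) = - (if {i\<in>B. u \<notin> S i} = {} then 1 else (0::real))" for u
      using inner_sum[OF fB, of u S] False by simp
    show ?thesis unfolding inner alt_sum[OF fB] using False by simp
  qed
  also have "\<dots> = - wt w (\<Inter>i\<in>B. S i)"
  proof -
    obtain j where "j \<in> B" using False by blast
    then have sub: "(\<Inter>i\<in>B. S i) \<subseteq> U" using assms(2,3) by blast
    show ?thesis unfolding wtU[OF sub]
      by (simp add: sum_negf[symmetric]) (rule sum.cong, auto)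
  qed
  finally show ?thesis using False by simp
qed

end
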